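(* Let $\psi\in L^2(\mathbb{R})$ be a Parseval wavelet, let $\eta$ be the Littlewood–Paley wavelet, and let $\Xi$ be the bounded linear operator on $L^2(\mathbb{R})$ with $\Xi(D^nT^\ell\eta)=D^nT^\ell\psi$ for all $(n,\ell)\in\mathbb{Z}^2$. Let $Q^\perp$ be the orthogonal projection onto $(\ker\Xi)^\perp$ and $W_0=\overline{\mathrm{span}}\{T^\ell\eta\mid \ell\in\mathbb{Z}\}$. Then $Q^\perp W_0\neq\{0\}$.
   Context: On $L^2(\mathbb{R})$, $(Tf)(t)=f(t-1)$ and $(Df)(t)=\sqrt2 f(2t)$. A Parseval wavelet is $\psi\in L^2(\mathbb{R})$ such that $\|x\|^2=\sum_{m,\ell\in\mathbb{Z}}|\langle x,D^mT^\ell\psi\rangle|^2$ for all $x\in L^2(\mathbb{R})$. The Littlewood–Paley wavelet $\eta$ is defined by $\widehat{\eta}=\frac{1}{\sqrt{2\pi}}\chi_{[-2\pi,-\pi]\cup[\pi,2\pi]}$ with $\widehat f(s)=\frac{1}{\sqrt{2\pi}}\int e^{-its}f(t)\,dt$; $\{D^nT^\ell\eta\}_{(n,\ell)\in\mathbb{Z}^2}$ is an orthonormal basis of $L^2(\mathbb{R})$, so $\Xi$ is well defined by $\Xi(\sum c_{n,\ell}D^nT^\ell\eta)=\sum c_{n,\ell}D^nT^\ell\psi$. *)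

theory Defs
  imports "HOL-Analysis.Analysis"
begin

text \<open>Elements of L2(R) are modelled as complex-valued functions on the reals;
  equality in L2 is equality almost everywhere, i.e. the L2 norm of the difference is 0.\<close>

type_synonym cfun = "real \<Rightarrow> complex"

definition L2 :: "cfun set" where
  "L2 = {f. f \<in> borel_measurable lborel \<and> integrable lborel (\<lambda>t. (cmod (f t))^2)}"

definition l2ip :: "cfun \<Rightarrow> cfun \<Rightarrow> complex" where
  "l2ip f g = (LINT t|lborel. f t * cnj (g t))"

definition l2norm :: "cfun \<Rightarrow> real" where
  "l2norm f = sqrt (LINT t|lborel. (cmod (f t))^2)"

definition Tp :: "int \<Rightarrow> cfun \<Rightarrow> cfun" where
  "Tp l f = (\<lambda>t. f (t - real_of_int l))"

definition Dp :: "int \<Rightarrow> cfun \<Rightarrow> cfun" where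
  "Dp m f = (\<lambda>t. complex_of_real (2 powr (real_of_int m / 2)) * f (2 powr (real_of_int m) * t))"

definition parseval_wavelet :: "cfun \<Rightarrow> bool" where
  "parseval_wavelet \<psi> \<longleftrightarrow> \<psi> \<in> L2 \<and>
     (\<forall>x\<in>L2. ((\<lambda>(m, l). (cmod (l2ip x (Dp m (Tp l \<psi>))))^2) has_sum (l2norm x)^2) UNIV)"

text \<open>Littlewood--Paley wavelet, defined through its (integrable) Fourier transform
  by Fourier inversion.\<close>

definition eta_hat :: "real \<Rightarrow> complex" where
  "eta_hat s = complex_of_real (1 / sqrt (2 * pi) *
      indicator ({-2*pi..-pi} \<union> {pi..2*pi}) s)"

definition eta :: cfun where
  "eta t = complex_of_real (1 / sqrt (2 * pi)) *
      (LINT s|lborel. exp (\<i> * complex_of_real (t * s)) * eta_hat s)"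

definition l2_span :: "cfun set \<Rightarrow> cfun set" where
  "l2_span S = {f. \<exists>F c. finite F \<and> F \<subseteq> S \<and> f = (\<lambda>t. \<Sum>g\<in>F. c g * g t)}"

definition l2_closure :: "cfun set \<Rightarrow> cfun set" where
  "l2_closure S = {f \<in> L2. \<forall>e>0. \<exists>g\<in>S. l2norm (\<lambda>t. f t - g t) < e}"

definition l2_ker :: "(cfun \<Rightarrow> cfun) \<Rightarrow> cfun set" where
  "l2_ker A = {f \<in> L2. l2norm (A f) = 0}"

definition l2_orth :: "cfun set \<Rightarrow> cfun set" where
  "l2_orth S = {g \<in> L2. \<forall>f\<in>S. l2ip f g = 0}"

definition is_l2_proj :: "cfun set \<Rightarrow> cfun \<Rightarrow> cfun \<Rightarrow> bool" where
  "is_l2_proj S w p \<longleftrightarrow> p \<in> S \<and> (\<forall>h\<in>S. l2ip (\<lambda>t. w t - p t) h = 0)"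

definition W0 :: "cfun set" where
  "W0 = l2_closure (l2_span (range (\<lambda>l. Tp l eta)))"

end

theory Submission
  imports Defs "HOL-Probability.Sinc_Integral"
begin


definition nsq :: "cfun \<Rightarrow> real" where
  "nsq f = (LINT t|lborel. (cmod (f t))^2)"

lemma l2norm_nsq: "l2norm f = sqrt (nsq f)"
  by (simp add: l2norm_def nsq_def)

lemma nsq_nonneg: "0 \<le> nsq f"
  unfolding nsq_def by (rule integral_nonneg_AE) auto

lemma L2_meas[measurable_dest]: "f \<in> L2 \<Longrightarrow> f \<in> borel_measurable lborel"
  by (simp add: L2_def)

lemma L2_meas_borel[measurable_dest]: "f \<in> L2 \<Longrightarrow> f \<in> borel_measurable borel"
  by (simp add: L2_def)

lemma borel_measurable_cnj[measurable (raw)]: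
  "f \<in> borel_measurable M \<Longrightarrow> (\<lambda>x. cnj (f x)) \<in> borel_measurable M"
  by (rule borel_measurable_continuous_on[where f=cnj]) (auto intro: continuous_intros)

lemma L2_int: "f \<in> L2 \<Longrightarrow> integrable lborel (\<lambda>t. (cmod (f t))^2)"
  by (simp add: L2_def)

lemma L2_I: "f \<in> borel_measurable lborel \<Longrightarrow> integrable lborel (\<lambda>t. (cmod (f t))^2) \<Longrightarrow> f \<in> L2"
  by (simp add: L2_def)

lemma sq_sum_bound: "(cmod (a * x + b * y))^2 \<le> 2 * (cmod a)^2 * (cmod x)^2 + 2 * (cmod b)^2 * (cmod y)^2"
proof -
  have "cmod (a * x + b * y) \<le> cmod a * cmod x + cmod b * cmod y"
    by (metis norm_mult norm_triangle_ineq)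
  then have "(cmod (a * x + b * y))^2 \<le> (cmod a * cmod x + cmod b * cmod y)^2"
    by (simp add: power_mono)
  also have "\<dots> = (cmod a * cmod x)^2 + (cmod b * cmod y)^2 + 2 * (cmod a * cmod x) * (cmod b * cmod y)"
    by (rule power2_sum)
  also have "\<dots> \<le> 2 * (cmod a * cmod x)^2 + 2 * (cmod b * cmod y)^2"
    using sum_squares_bound[of "cmod a * cmod x" "cmod b * cmod y"] by linarith
  finally show ?thesis by (simp only: power_mult_distrib mult.assoc)
qed

lemma L2_lin: "f \<in> L2 \<Longrightarrow> g \<in> L2 \<Longrightarrow> (\<lambda>t. a * f t + b * g t) \<in> L2"
proof -
  assume f: "f \<in> L2" and g: "g \<in> L2"
  note [measurable] = L2_meas[OF f] L2_meas[OF g] L2_meas_borel[OF f] L2_meas_borel[OF g]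
  show ?thesis
  proof (rule L2_I)
    show "integrable lborel (\<lambda>t. (cmod (a * f t + b * g t))\<^sup>2)"
    proof (rule Bochner_Integration.integrable_bound)
      show "integrable lborel (\<lambda>t. 2 * (cmod a)^2 * (cmod (f t))^2 + 2 * (cmod b)^2 * (cmod (g t))^2)"
        using L2_int[OF f] L2_int[OF g] by auto
      show "AE t in lborel. norm ((cmod (a * f t + b * g t))\<^sup>2) \<le> norm (2 * (cmod a)^2 * (cmod (f t))^2 + 2 * (cmod b)^2 * (cmod (g t))^2)"
        using sq_sum_bound[of a _ b] by (auto intro!: always_eventually simp del: power_mult_distrib)
    qed auto
  qed auto
qed

lemma L2_ext: "f \<in> L2 \<Longrightarrow> (\<And>t. g t = f t) \<Longrightarrow> g \<in> L2"
proof -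
  assume "f \<in> L2" "\<And>t. g t = f t"
  then have "g = f" by auto
  then show ?thesis using \<open>f \<in> L2\<close> by simp
qed

lemma L2_diff: "f \<in> L2 \<Longrightarrow> g \<in> L2 \<Longrightarrow> (\<lambda>t. f t - g t) \<in> L2"
  by (rule L2_ext[OF L2_lin[of f g 1 "-1"]]) auto

lemma L2_add: "f \<in> L2 \<Longrightarrow> g \<in> L2 \<Longrightarrow> (\<lambda>t. f t + g t) \<in> L2"
  by (rule L2_ext[OF L2_lin[of f g 1 1]]) auto

lemma L2_scale: "f \<in> L2 \<Longrightarrow> (\<lambda>t. a * f t) \<in> L2"
  by (rule L2_ext[OF L2_lin[of f f a 0]]) auto

lemma L2_ip_int: "f \<in> L2 \<Longrightarrow> g \<in> L2 \<Longrightarrow> integrable lborel (\<lambda>t. f t * cnj (g t))"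
proof -
  assume f: "f \<in> L2" and g: "g \<in> L2"
  note [measurable] = L2_meas[OF f] L2_meas[OF g] L2_meas_borel[OF f] L2_meas_borel[OF g]
  show ?thesis
  proof (rule Bochner_Integration.integrable_bound)
    show "integrable lborel (\<lambda>t. (cmod (f t))^2 + (cmod (g t))^2)"
      using L2_int[OF f] L2_int[OF g] by auto
    have "cmod (f t * cnj (g t)) \<le> (cmod (f t))^2 + (cmod (g t))^2" for t
    proof -
      have "cmod (f t * cnj (g t)) = cmod (f t) * cmod (g t)" by (simp add: norm_mult)
      also have "\<dots> \<le> (cmod (f t))^2 + (cmod (g t))^2"
        using sum_squares_bound[of "cmod (f t)" "cmod (g t)"] mult_nonneg_nonneg[OF norm_ge_zero norm_ge_zero, of "f t" "g t"] by linarith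
      finally show ?thesis .
    qed
    then show "AE t in lborel. norm (f t * cnj (g t)) \<le> norm ((cmod (f t))^2 + (cmod (g t))^2)"
      by (auto intro!: always_eventually)
  qed auto
qed

lemma l2ip_cnj: "l2ip g f = cnj (l2ip f g)"
proof -
  have "cnj (l2ip f g) = (LINT t|lborel. cnj (f t * cnj (g t)))"
    unfolding l2ip_def by (rule Bochner_Integration.integral_cnj[symmetric])
  also have "\<dots> = l2ip g f" unfolding l2ip_def by (simp add: mult.commute)
  finally show ?thesis by simp
qed

lemma l2ip_lin_left:
  assumes "f \<in> L2" "g \<in> L2" "h \<in> L2"
  shows "l2ip (\<lambda>t. a * f t + b * g t) h = a * l2ip f h + b * l2ip g h"
proof -
  have "l2ip (\<lambda>t. a * f t + b * g t) h = (LINT t|lborel. a * (f t * cnj (h t)) + b * (g t * cnj (h t)))"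
    unfolding l2ip_def by (simp only: distrib_right mult.assoc)
  also have "\<dots> = (LINT t|lborel. a * (f t * cnj (h t))) + (LINT t|lborel. b * (g t * cnj (h t)))"
  proof (rule Bochner_Integration.integral_add)
    show "integrable lborel (\<lambda>t. a * (f t * cnj (h t)))"
      using Bochner_Integration.integrable_mult_right[OF L2_ip_int[OF assms(1,3)], of a] .
    show "integrable lborel (\<lambda>t. b * (g t * cnj (h t)))"
      using Bochner_Integration.integrable_mult_right[OF L2_ip_int[OF assms(2,3)], of b] .
  qed
  also have "\<dots> = a * l2ip f h + b * l2ip g h"
    unfolding l2ip_def by (simp only: Bochner_Integration.integral_mult_right_zero)
  finally show ?thesis .
qed

lemma l2ip_lin_right:
  assumes "f \<in> L2" "g \<in> L2" "h \<in> L2"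
  shows "l2ip h (\<lambda>t. a * f t + b * g t) = cnj a * l2ip h f + cnj b * l2ip h g"
proof -
  have "l2ip h (\<lambda>t. a * f t + b * g t) = cnj (l2ip (\<lambda>t. a * f t + b * g t) h)" by (rule l2ip_cnj)
  also have "\<dots> = cnj (a * l2ip f h + b * l2ip g h)" by (simp only: l2ip_lin_left[OF assms])
  also have "\<dots> = cnj a * cnj (l2ip f h) + cnj b * cnj (l2ip g h)" by simp
  also have "\<dots> = cnj a * l2ip h f + cnj b * l2ip h g" by (simp only: l2ip_cnj[of h f, symmetric] l2ip_cnj[of h g, symmetric])
  finally show ?thesis .
qed

lemma l2ip_self: "l2ip f f = complex_of_real (nsq f)"
proof -
  have "(\<lambda>t. f t * cnj (f t)) = (\<lambda>t. complex_of_real ((cmod (f t))^2))"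
    by (simp only: complex_norm_square)
  then have "l2ip f f = (LINT t|lborel. complex_of_real ((cmod (f t))^2))"
    unfolding l2ip_def by simp
  then show ?thesis unfolding nsq_def by (simp only: integral_complex_of_real)
qed

lemma nsq_expand:
  assumes u: "u \<in> L2" and h: "h \<in> L2"
  shows "nsq (\<lambda>t. u t - z * h t) = nsq u - 2 * Re (cnj z * l2ip u h) + (cmod z)^2 * nsq h"
proof -
  let ?v = "\<lambda>t. u t - z * h t"
  define c where "c = l2ip u h"
  have e1: "?v = (\<lambda>t. 1 * u t + (-z) * h t)" by auto
  have v: "?v \<in> L2" by (subst e1, rule L2_lin[OF u h])
  have "complex_of_real (nsq ?v) = l2ip ?v ?v" by (simp only: l2ip_self)
  also have "\<dots> = 1 * l2ip u ?v + (-z) * l2ip h ?v"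
    by (subst (1) e1, rule l2ip_lin_left[OF u h v])
  also have "l2ip u ?v = cnj 1 * l2ip u u + cnj (-z) * l2ip u h"
    by (subst e1, rule l2ip_lin_right[OF u h u])
  also have "l2ip h ?v = cnj 1 * l2ip h u + cnj (-z) * l2ip h h"
    by (subst e1, rule l2ip_lin_right[OF u h h])
  also have "l2ip h u = cnj c" unfolding c_def by (rule l2ip_cnj)
  finally have 1: "complex_of_real (nsq ?v) = 1 * (cnj 1 * nsq u + cnj (-z) * c) + (-z) * (cnj 1 * cnj c + cnj (-z) * nsq h)"
    by (simp only: l2ip_self c_def)
  have 2: "z * cnj z = complex_of_real ((cmod z)^2)" by (simp only: complex_norm_square)
  have 3: "cnj z * c + z * cnj c = complex_of_real (2 * Re (cnj z * c))"
    using complex_add_cnj[of "cnj z * c"] by simp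
  have "complex_of_real (nsq ?v) = nsq u - (cnj z * c + z * cnj c) + (z * cnj z) * nsq h"
    unfolding 1 by (simp add: algebra_simps)
  also have "\<dots> = complex_of_real (nsq u - 2 * Re (cnj z * c) + (cmod z)^2 * nsq h)"
    unfolding 2 3 by simp
  finally show ?thesis unfolding c_def using of_real_eq_iff by blast
qed



lemma nsq_zero_AE: "f \<in> L2 \<Longrightarrow> nsq f = 0 \<Longrightarrow> AE t in lborel. f t = 0"
proof -
  assume f: "f \<in> L2" "nsq f = 0"
  have "AE t in lborel. (cmod (f t))^2 = 0"
    using f integral_nonneg_eq_0_iff_AE[OF L2_int[OF f(1)]] unfolding nsq_def by auto
  then show ?thesis by auto
qed

lemma quad_ineq:
  assumes u: "u \<in> L2" and h: "h \<in> L2"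
  shows "0 \<le> nsq u - 2 * s * (cmod (l2ip u h))^2 + s^2 * (cmod (l2ip u h))^2 * nsq h"
proof -
  define c where "c = l2ip u h"
  have "0 \<le> nsq (\<lambda>t. u t - (complex_of_real s * c) * h t)" by (rule nsq_nonneg)
  also have "\<dots> = nsq u - 2 * Re (cnj (complex_of_real s * c) * c) + (cmod (complex_of_real s * c))^2 * nsq h"
    unfolding c_def by (rule nsq_expand[OF u h])
  also have "cnj (complex_of_real s * c) * c = complex_of_real (s * (cmod c)^2)"
  proof -
    have "cnj c * c = complex_of_real ((cmod c)^2)" by (simp only: complex_norm_square mult.commute)
    then show ?thesis by (simp add: mult.assoc mult.left_commute)
  qed
  also have "(cmod (complex_of_real s * c))^2 = s^2 * (cmod c)^2"
    by (simp add: norm_mult power_mult_distrib)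
  finally show ?thesis unfolding c_def by (simp add: mult.assoc)
qed

lemma cauchy_schwarz_sq:
  assumes u: "u \<in> L2" and h: "h \<in> L2"
  shows "(cmod (l2ip u h))^2 \<le> nsq u * nsq h"
proof -
  define C where "C = (cmod (l2ip u h))^2"
  have C0: "0 \<le> C" unfolding C_def by simp
  have q: "\<And>s. 0 \<le> nsq u - 2 * s * C + s^2 * C * nsq h"
    unfolding C_def by (rule quad_ineq[OF u h])
  show ?thesis
  proof (cases "nsq h = 0")
    case True
    show ?thesis
    proof (cases "C = 0")
      case False
      then have Cp: "C > 0" using C0 by simp
      have "0 \<le> nsq u - 2 * ((nsq u + 1) / (2 * C)) * C"
        using q[of "(nsq u + 1) / (2 * C)"] True by simp
      also have "\<dots> = -1" using Cp by (simp add: field_simps)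
      finally show ?thesis by simp
    qed (simp add: C_def True)
  next
    case False
    then have hp: "nsq h > 0" using nsq_nonneg[of h] by simp
    have "0 \<le> nsq u - 2 * (1 / nsq h) * C + (1 / nsq h)^2 * C * nsq h"
      by (rule q)
    also have "\<dots> = nsq u - C / nsq h"
      using hp by (simp add: field_simps power2_eq_square)
    finally have "C / nsq h \<le> nsq u" by simp
    then have "C \<le> nsq u * nsq h" using hp by (simp add: field_simps)
    then show ?thesis unfolding C_def .
  qed
qed

lemma cauchy_schwarz:
  assumes u: "u \<in> L2" and h: "h \<in> L2"
  shows "cmod (l2ip u h) \<le> l2norm u * l2norm h"
proof -
  have "sqrt ((cmod (l2ip u h))^2) \<le> sqrt (nsq u * nsq h)"
    using cauchy_schwarz_sq[OF u h] by (rule real_sqrt_le_mono)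
  then show ?thesis by (simp add: l2norm_nsq real_sqrt_mult)
qed

lemma l2norm_nonneg: "0 \<le> l2norm f"
  by (simp add: l2norm_nsq nsq_nonneg)

lemma l2norm_sq: "(l2norm f)^2 = nsq f"
  by (simp add: l2norm_nsq nsq_nonneg)

lemma l2norm_add:
  assumes u: "u \<in> L2" and h: "h \<in> L2"
  shows "l2norm (\<lambda>t. u t + h t) \<le> l2norm u + l2norm h"
proof -
  have e: "(\<lambda>t. u t + h t) = (\<lambda>t. u t - (-1) * h t)" by simp
  have "nsq (\<lambda>t. u t + h t) = nsq u - 2 * Re (cnj (-1) * l2ip u h) + (cmod (-1::complex))^2 * nsq h"
    unfolding e by (rule nsq_expand[OF u h])
  also have "\<dots> = nsq u + 2 * Re (l2ip u h) + nsq h" by simp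
  also have "\<dots> \<le> nsq u + 2 * (l2norm u * l2norm h) + nsq h"
    using complex_Re_le_cmod[of "l2ip u h"] cauchy_schwarz[OF u h] by linarith
  also have "\<dots> = (l2norm u + l2norm h)^2"
    by (simp add: power2_sum l2norm_sq)
  finally have "nsq (\<lambda>t. u t + h t) \<le> (l2norm u + l2norm h)^2" .
  then have "sqrt (nsq (\<lambda>t. u t + h t)) \<le> sqrt ((l2norm u + l2norm h)^2)"
    by (rule real_sqrt_le_mono)
  then show ?thesis using l2norm_nonneg[of u] l2norm_nonneg[of h] by (simp add: l2norm_nsq[symmetric])
qed

lemma l2norm_tri:
  assumes "f \<in> L2" "g \<in> L2" "k \<in> L2"
  shows "l2norm (\<lambda>t. f t - g t) \<le> l2norm (\<lambda>t. f t - k t) + l2norm (\<lambda>t. k t - g t)"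
proof -
  have "l2norm (\<lambda>t. (f t - k t) + (k t - g t)) \<le> l2norm (\<lambda>t. f t - k t) + l2norm (\<lambda>t. k t - g t)"
    by (rule l2norm_add) (intro L2_diff assms)+
  then show ?thesis by simp
qed

lemma nsq_scale: "nsq (\<lambda>t. a * f t) = (cmod a)^2 * nsq f"
  unfolding nsq_def by (simp add: norm_mult power_mult_distrib)

lemma l2norm_scale: "l2norm (\<lambda>t. a * f t) = cmod a * l2norm f"
  by (simp add: l2norm_nsq nsq_scale real_sqrt_mult)

lemma l2norm_commute: "l2norm (\<lambda>t. f t - g t) = l2norm (\<lambda>t. g t - f t)"
  unfolding l2norm_def by (simp add: norm_minus_commute)

lemma l2norm_zero_AE: "f \<in> L2 \<Longrightarrow> l2norm f = 0 \<Longrightarrow> AE t in lborel. f t = 0"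
  by (rule nsq_zero_AE) (auto simp: l2norm_nsq)

lemma l2ip_zero_left: "l2norm f = 0 \<Longrightarrow> f \<in> L2 \<Longrightarrow> g \<in> L2 \<Longrightarrow> l2ip f g = 0"
  using cauchy_schwarz[of f g] by simp



definition rho :: "real \<Rightarrow> real" where "rho t = inverse (1 + t^2)"

lemma rho_pos: "0 < rho t"
  unfolding rho_def by (simp add: add_pos_nonneg)

lemma rho_le1: "rho t \<le> 1"
  unfolding rho_def by (simp add: inverse_le_1_iff add_nonneg_nonneg)

lemma rho_meas[measurable]: "rho \<in> borel_measurable borel"
  unfolding rho_def by measurable

lemma rho_int: "integrable lborel rho"
proof -
  have "set_integrable lborel (einterval (-\<infinity>) \<infinity>) (\<lambda>x. inverse (1 + x^2))"
    by (rule integrable_inverse_1_plus_square)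
  moreover have "einterval (-\<infinity>) \<infinity> = UNIV" by (auto simp: einterval_def)
  ultimately show ?thesis unfolding set_integrable_def rho_def by simp
qed

definition Rw :: cfun where "Rw t = complex_of_real (rho t)"

lemma Rw_L2: "Rw \<in> L2"
proof (rule L2_I)
  show "Rw \<in> borel_measurable lborel" unfolding Rw_def by measurable
  show "integrable lborel (\<lambda>t. (cmod (Rw t))\<^sup>2)"
  proof (rule Bochner_Integration.integrable_bound[OF rho_int])
    show "AE t in lborel. norm ((cmod (Rw t))\<^sup>2) \<le> norm (rho t)"
    proof (intro always_eventually allI)
      fix t
      have "(rho t)^2 \<le> rho t" using rho_le1[of t] rho_pos[of t]
        by (simp add: power2_eq_square mult_le_cancel_right1)
      then show "norm ((cmod (Rw t))\<^sup>2) \<le> norm (rho t)"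
        using rho_pos[of t] by (simp add: Rw_def)
    qed
  qed (simp add: Rw_def)
qed

lemma weighted_L1_bound:
  assumes g: "g \<in> L2"
  shows "integrable lborel (\<lambda>t. rho t * cmod (g t))"
    and "(LINT t|lborel. rho t * cmod (g t)) \<le> l2norm g * l2norm Rw"
proof -
  define u where "u = (\<lambda>t. complex_of_real (cmod (g t)))"
  note [measurable] = L2_meas[OF g] L2_meas_borel[OF g]
  have u: "u \<in> L2"
    using L2_int[OF g] unfolding u_def by (intro L2_I) auto
  have nu: "l2norm u = l2norm g" unfolding u_def l2norm_def by simp
  have ii: "integrable lborel (\<lambda>t. u t * cnj (Rw t))" by (rule L2_ip_int[OF u Rw_L2])
  have eq: "(\<lambda>t. u t * cnj (Rw t)) = (\<lambda>t. complex_of_real (rho t * cmod (g t)))"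
    by (auto simp: u_def Rw_def)
  have ir: "integrable lborel (\<lambda>t. complex_of_real (rho t * cmod (g t)))" using ii unfolding eq .
  then show "integrable lborel (\<lambda>t. rho t * cmod (g t))" by (simp only: complex_of_real_integrable_eq)
  have "l2ip u Rw = complex_of_real (LINT t|lborel. rho t * cmod (g t))"
    unfolding l2ip_def eq by (simp only: integral_complex_of_real)
  then have "cmod (l2ip u Rw) = \<bar>LINT t|lborel. rho t * cmod (g t)\<bar>" by simp
  then have "(LINT t|lborel. rho t * cmod (g t)) \<le> cmod (l2ip u Rw)" by simp
  also have "\<dots> \<le> l2norm u * l2norm Rw" by (rule cauchy_schwarz[OF u Rw_L2])
  finally show "(LINT t|lborel. rho t * cmod (g t)) \<le> l2norm g * l2norm Rw" unfolding nu .
qed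



lemma riesz_fischer:
  fixes F :: "nat \<Rightarrow> cfun"
  assumes F: "\<And>n. F n \<in> L2"
    and cau: "\<And>e. e > 0 \<Longrightarrow> \<exists>M. \<forall>m\<ge>M. \<forall>n\<ge>M. l2norm (\<lambda>t. F m t - F n t) < e"
  shows "\<exists>f\<in>L2. \<forall>e>0. \<exists>M. \<forall>n\<ge>M. l2norm (\<lambda>t. F n t - f t) < e"
proof -
  define M' where "M' = density lborel (\<lambda>t. ennreal (rho t))"
  note [measurable] = L2_meas[OF F] L2_meas_borel[OF F]
  have intM: "integrable M' (F n)" for n
  proof -
    have eq: "(\<lambda>x. rho x *\<^sub>R F n x) = (\<lambda>x. F n x * cnj (Rw x))"
      by (auto simp: Rw_def scaleR_conv_of_real)
    have "integrable lborel (\<lambda>x. rho x *\<^sub>R F n x)"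
      unfolding eq by (rule L2_ip_int[OF F Rw_L2])
    then show ?thesis unfolding M'_def
      by (subst integrable_density) (auto simp: rho_pos less_imp_le)
  qed
  have L1: "(LINT x|M'. norm (F i x - F j x)) = (LINT x|lborel. rho x * cmod (F i x - F j x))" for i j
    unfolding M'_def by (subst integral_density) (auto simp: rho_pos less_imp_le)
  have cauL1: "\<exists>N. \<forall>i\<ge>N. \<forall>j\<ge>N. (LINT x|M'. norm (F i x - F j x)) < e" if e: "e > 0" for e
  proof -
    define K where "K = l2norm Rw + 1"
    have K: "K > 0" using l2norm_nonneg[of Rw] unfolding K_def by linarith
    obtain N where N: "\<forall>m\<ge>N. \<forall>n\<ge>N. l2norm (\<lambda>t. F m t - F n t) < e / K"
      using cau[of "e/K"] K e by auto
    show ?thesis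
    proof (intro exI allI impI)
      fix i j assume "i \<ge> N" "j \<ge> N"
      then have a: "l2norm (\<lambda>t. F i t - F j t) < e / K" using N by auto
      have "(LINT x|M'. norm (F i x - F j x)) \<le> l2norm (\<lambda>t. F i t - F j t) * l2norm Rw"
        unfolding L1 by (rule weighted_L1_bound(2)[OF L2_diff[OF F F]])
      also have "\<dots> \<le> l2norm (\<lambda>t. F i t - F j t) * K"
        by (intro mult_left_mono) (auto simp: K_def l2norm_nonneg)
      also have "\<dots> < e / K * K" using a K by (intro mult_strict_right_mono)
      also have "\<dots> = e" using K by simp
      finally show "(LINT x|M'. norm (F i x - F j x)) < e" .
    qed
  qed
  obtain r where r: "strict_mono r" and aeM: "AE x in M'. Cauchy (\<lambda>i. F (r i) x)"
    using cauchy_L1_AE_cauchy_subseq[of M' F, OF intM cauL1] by blast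
  have ae: "AE x in lborel. Cauchy (\<lambda>i. F (r i) x)"
    using aeM unfolding M'_def by (subst (asm) AE_density) (auto simp: rho_pos)
  define f where "f x = lim (\<lambda>i. F (r i) x)" for x
  have fm[measurable]: "f \<in> borel_measurable lborel" unfolding f_def by measurable
  have conv: "AE x in lborel. (\<lambda>i. F (r i) x) \<longlonglongrightarrow> f x"
    using ae by eventually_elim (simp add: f_def Cauchy_convergent_iff convergent_LIMSEQ_iff)
  have key: "(\<lambda>t. F (r k) t - f t) \<in> L2 \<and> l2norm (\<lambda>t. F (r k) t - f t) \<le> e"
    if e: "e > 0" and N: "\<forall>m\<ge>N. \<forall>n\<ge>N. l2norm (\<lambda>t. F m t - F n t) < e" and k: "k \<ge> N" for e N k
  proof -
    let ?u = "\<lambda>i x. ennreal ((cmod (F (r k) x - F (r i) x))^2)"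
    have meas_g[measurable]: "(\<lambda>t. F (r k) t - f t) \<in> borel_measurable lborel" by measurable
    have "(\<integral>\<^sup>+x. ennreal ((cmod (F (r k) x - f x))^2) \<partial>lborel) = (\<integral>\<^sup>+x. liminf (\<lambda>i. ?u i x) \<partial>lborel)"
    proof (rule nn_integral_cong_AE)
      show "AE x in lborel. ennreal ((cmod (F (r k) x - f x))^2) = liminf (\<lambda>i. ?u i x)"
        using conv
      proof eventually_elim
        case (elim x)
        then have "(\<lambda>i. ?u i x) \<longlonglongrightarrow> ennreal ((cmod (F (r k) x - f x))^2)"
          by (intro tendsto_intros)
        then have "liminf (\<lambda>i. ?u i x) = ennreal ((cmod (F (r k) x - f x))^2)"
          by (rule lim_imp_Liminf[OF sequentially_bot])
        then show ?case by simp
      qed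
    qed
    also have "\<dots> \<le> liminf (\<lambda>i. \<integral>\<^sup>+x. ?u i x \<partial>lborel)"
      by (rule nn_integral_liminf) measurable
    also have "\<dots> \<le> ennreal (e^2)"
    proof (rule Liminf_le)
      show "(sequentially :: nat filter) \<noteq> bot" by simp
      show "\<forall>\<^sub>F i in sequentially. (\<integral>\<^sup>+x. ?u i x \<partial>lborel) \<le> ennreal (e^2)"
        unfolding eventually_sequentially
      proof (intro exI allI impI)
        fix i assume "i \<ge> N"
        then have rk: "r k \<ge> N" "r i \<ge> N" using k seq_suble[OF r, of k] seq_suble[OF r, of i] by linarith+
        have d: "(\<lambda>t. F (r k) t - F (r i) t) \<in> L2" by (rule L2_diff[OF F F])
        have 1: "(\<integral>\<^sup>+x. ?u i x \<partial>lborel) = ennreal (nsq (\<lambda>t. F (r k) t - F (r i) t))"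
          unfolding nsq_def by (rule nn_integral_eq_integral[OF L2_int[OF d]]) simp
        have "nsq (\<lambda>t. F (r k) t - F (r i) t) = (l2norm (\<lambda>t. F (r k) t - F (r i) t))^2"
          by (simp add: l2norm_sq)
        also have "\<dots> \<le> e^2"
        proof -
          have "l2norm (\<lambda>t. F (r k) t - F (r i) t) < e" using N rk by auto
          then show ?thesis by (intro power_mono less_imp_le l2norm_nonneg)
        qed
        finally show "(\<integral>\<^sup>+x. ?u i x \<partial>lborel) \<le> ennreal (e^2)" unfolding 1 by (rule ennreal_leI)
      qed
    qed
    finally have bnd: "(\<integral>\<^sup>+x. ennreal ((cmod (F (r k) x - f x))^2) \<partial>lborel) \<le> ennreal (e^2)" .
    have int: "integrable lborel (\<lambda>x. (cmod (F (r k) x - f x))^2)"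
    proof (rule integrableI_bounded)
      show "(\<integral>\<^sup>+x. ennreal (norm ((cmod (F (r k) x - f x))^2)) \<partial>lborel) < \<infinity>"
        using bnd by (simp add: order_le_less_trans)
    qed measurable
    have inL2: "(\<lambda>t. F (r k) t - f t) \<in> L2" by (rule L2_I[OF meas_g int])
    have "ennreal (nsq (\<lambda>t. F (r k) t - f t)) \<le> ennreal (e^2)"
      using bnd nn_integral_eq_integral[OF int] by (simp add: nsq_def)
    then have "nsq (\<lambda>t. F (r k) t - f t) \<le> e^2" by (simp add: ennreal_le_iff)
    then have "sqrt (nsq (\<lambda>t. F (r k) t - f t)) \<le> sqrt (e^2)" by (rule real_sqrt_le_mono)
    then have "l2norm (\<lambda>t. F (r k) t - f t) \<le> e" using e by (simp add: l2norm_nsq)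
    then show ?thesis using inL2 by blast
  qed
  obtain N1 where N1: "\<forall>m\<ge>N1. \<forall>n\<ge>N1. l2norm (\<lambda>t. F m t - F n t) < 1" using cau[of 1] by auto
  have g1: "(\<lambda>t. F (r N1) t - f t) \<in> L2" using key[of 1 N1 N1] N1 by auto
  have fL2: "f \<in> L2" by (rule L2_ext[OF L2_diff[OF F g1]]) simp
  show ?thesis
  proof (intro bexI[OF _ fL2] allI impI)
    fix e :: real assume e: "e > 0"
    obtain N where N: "\<forall>m\<ge>N. \<forall>n\<ge>N. l2norm (\<lambda>t. F m t - F n t) < e/2" using cau[of "e/2"] e by auto
    show "\<exists>M. \<forall>n\<ge>M. l2norm (\<lambda>t. F n t - f t) < e"
    proof (intro exI allI impI)
      fix n assume n: "n \<ge> N"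
      have rn: "r n \<ge> N" using seq_suble[OF r, of n] n by linarith
      have "l2norm (\<lambda>t. F n t - f t) \<le> l2norm (\<lambda>t. F n t - F (r n) t) + l2norm (\<lambda>t. F (r n) t - f t)"
        by (rule l2norm_tri[OF F fL2 F])
      also have "\<dots> < e/2 + e/2"
        using N n rn key[of "e/2" N n] e by (intro add_less_le_mono) auto
      finally show "l2norm (\<lambda>t. F n t - f t) < e" by simp
    qed
  qed
qed



lemma quad_eq:
  assumes u: "u \<in> L2" and h: "h \<in> L2"
  shows "nsq (\<lambda>t. u t - (complex_of_real s * l2ip u h) * h t) = nsq u - 2 * s * (cmod (l2ip u h))^2 + s^2 * (cmod (l2ip u h))^2 * nsq h"
proof -
  define c where "c = l2ip u h"
  have "nsq (\<lambda>t. u t - (complex_of_real s * c) * h t) = nsq u - 2 * Re (cnj (complex_of_real s * c) * c) + (cmod (complex_of_real s * c))^2 * nsq h"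
    unfolding c_def by (rule nsq_expand[OF u h])
  also have "cnj (complex_of_real s * c) * c = complex_of_real (s * (cmod c)^2)"
  proof -
    have "cnj c * c = complex_of_real ((cmod c)^2)" by (simp only: complex_norm_square mult.commute)
    then show ?thesis by (simp add: mult.assoc mult.left_commute)
  qed
  also have "(cmod (complex_of_real s * c))^2 = s^2 * (cmod c)^2"
    by (simp add: norm_mult power_mult_distrib)
  finally show ?thesis unfolding c_def by (simp add: mult.assoc)
qed

lemma parallelogram:
  assumes a: "a \<in> L2" and b: "b \<in> L2"
  shows "nsq (\<lambda>t. a t + b t) + nsq (\<lambda>t. a t - b t) = 2 * nsq a + 2 * nsq b"
proof -
  have e1: "(\<lambda>t. a t + b t) = (\<lambda>t. a t - (-1) * b t)" by simp
  have e2: "(\<lambda>t. a t - b t) = (\<lambda>t. a t - 1 * b t)" by simp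
  show ?thesis unfolding e1 e2 nsq_expand[OF a b] by simp
qed

lemma projection:
  assumes KL2: "K \<subseteq> L2" and Kne: "K \<noteq> {}"
    and Klin: "\<And>f g a b. f \<in> K \<Longrightarrow> g \<in> K \<Longrightarrow> (\<lambda>t. a * f t + b * g t) \<in> K"
    and Kcl: "\<And>f. f \<in> L2 \<Longrightarrow> (\<forall>e>0. \<exists>g\<in>K. l2norm (\<lambda>t. f t - g t) < e) \<Longrightarrow> f \<in> K"
    and w: "w \<in> L2"
  shows "\<exists>k\<in>K. \<forall>h\<in>K. l2ip (\<lambda>t. w t - k t) h = 0"
proof -
  define S where "S = (\<lambda>k. nsq (\<lambda>t. w t - k t)) ` K"
  define \<delta> where "\<delta> = Inf S"
  have Sne: "S \<noteq> {}" using Kne by (simp add: S_def)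
  have Sbdd: "bdd_below S" unfolding S_def by (rule bdd_belowI[of _ 0]) (auto simp: nsq_nonneg)
  have dlow: "\<delta> \<le> nsq (\<lambda>t. w t - k t)" if "k \<in> K" for k
    unfolding \<delta>_def using that by (intro cInf_lower Sbdd) (auto simp: S_def)
  have "\<exists>k. k \<in> K \<and> nsq (\<lambda>t. w t - k t) < \<delta> + inverse (real (Suc n))" for n
  proof -
    have "Inf S < \<delta> + inverse (real (Suc n))" unfolding \<delta>_def by simp
    then obtain x where "x \<in> S" "x < \<delta> + inverse (real (Suc n))"
      using cInf_less_iff[OF Sne Sbdd] by blast
    then show ?thesis unfolding S_def by auto
  qed
  then obtain kk where kkK: "\<And>n. kk n \<in> K" and kkd: "\<And>n. nsq (\<lambda>t. w t - kk n t) < \<delta> + inverse (real (Suc n))"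
    by metis
  have kkL2: "kk n \<in> L2" for n using kkK KL2 by auto
  have pd: "nsq (\<lambda>t. kk m t - kk n t) \<le> 2 * inverse (real (Suc n)) + 2 * inverse (real (Suc m))" for m n
  proof -
    define a where "a = (\<lambda>t. w t - kk n t)"
    define b where "b = (\<lambda>t. w t - kk m t)"
    define mid where "mid = (\<lambda>t. (1/2) * kk n t + (1/2) * kk m t)"
    have aL: "a \<in> L2" unfolding a_def by (rule L2_diff[OF w kkL2])
    have bL: "b \<in> L2" unfolding b_def by (rule L2_diff[OF w kkL2])
    have midK: "mid \<in> K" unfolding mid_def by (rule Klin[OF kkK kkK])
    have e1: "(\<lambda>t. a t + b t) = (\<lambda>t. 2 * (w t - mid t))"
      by (auto simp: a_def b_def mid_def algebra_simps)
    have e2: "(\<lambda>t. a t - b t) = (\<lambda>t. kk m t - kk n t)"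
      by (auto simp: a_def b_def)
    have "nsq (\<lambda>t. a t + b t) = 4 * nsq (\<lambda>t. w t - mid t)"
      unfolding e1 nsq_scale by simp
    moreover have "\<delta> \<le> nsq (\<lambda>t. w t - mid t)" by (rule dlow[OF midK])
    moreover have "nsq a < \<delta> + inverse (real (Suc n))" unfolding a_def by (rule kkd)
    moreover have "nsq b < \<delta> + inverse (real (Suc m))" unfolding b_def by (rule kkd)
    moreover have "nsq (\<lambda>t. a t + b t) + nsq (\<lambda>t. kk m t - kk n t) = 2 * nsq a + 2 * nsq b"
      using parallelogram[OF aL bL] unfolding e2 .
    ultimately show ?thesis by linarith
  qed
  have cau: "\<exists>M. \<forall>m\<ge>M. \<forall>n\<ge>M. l2norm (\<lambda>t. kk m t - kk n t) < e" if e: "e > 0" for e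
  proof -
    obtain M :: nat where M: "4 / e^2 < real M" using reals_Archimedean2 by blast
    have Mp: "real M > 0" using M e by (smt (verit) divide_pos_pos zero_less_power)
    have e2: "0 < e^2" using e by simp
    have a: "4 < real M * e^2" using M e2 by (simp add: field_simps)
    have b: "e^2 * real (Suc M) = e^2 + real M * e^2" by (simp add: algebra_simps)
    have "4 < e^2 * real (Suc M)" using a b e2 by linarith
    then have M4: "4 * inverse (real (Suc M)) < e^2" by (simp add: field_simps)
    show ?thesis
    proof (intro exI allI impI)
      fix m n assume mn: "m \<ge> M" "n \<ge> M"
      have i1: "inverse (real (Suc n)) \<le> inverse (real (Suc M))" using mn by (simp add: field_simps)
      have i2: "inverse (real (Suc m)) \<le> inverse (real (Suc M))" using mn by (simp add: field_simps)
      have "nsq (\<lambda>t. kk m t - kk n t) < e^2" using pd[of m n] i1 i2 M4 by linarith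
      then have "sqrt (nsq (\<lambda>t. kk m t - kk n t)) < sqrt (e^2)" by (rule real_sqrt_less_mono)
      then show "l2norm (\<lambda>t. kk m t - kk n t) < e" using e by (simp add: l2norm_nsq)
    qed
  qed
  obtain k where kL2: "k \<in> L2" and kconv: "\<forall>e>0. \<exists>M. \<forall>n\<ge>M. l2norm (\<lambda>t. kk n t - k t) < e"
    using riesz_fischer[of kk, OF kkL2 cau] by blast
  have kK: "k \<in> K"
  proof (rule Kcl[OF kL2], intro allI impI)
    fix e :: real assume "e > 0"
    then obtain M where "\<forall>n\<ge>M. l2norm (\<lambda>t. kk n t - k t) < e" using kconv by blast
    then have "l2norm (\<lambda>t. k t - kk M t) < e" by (simp add: l2norm_commute)
    then show "\<exists>g\<in>K. l2norm (\<lambda>t. k t - g t) < e" using kkK by blast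
  qed
  have T1: "(\<lambda>n. nsq (\<lambda>t. w t - kk n t)) \<longlonglongrightarrow> \<delta>"
  proof (rule tendsto_sandwich[of "\<lambda>_. \<delta>" _ _ "\<lambda>n. \<delta> + inverse (real (Suc n))"])
    show "\<forall>\<^sub>F n in sequentially. \<delta> \<le> nsq (\<lambda>t. w t - kk n t)" by (intro always_eventually allI dlow kkK)
    show "\<forall>\<^sub>F n in sequentially. nsq (\<lambda>t. w t - kk n t) \<le> \<delta> + inverse (real (Suc n))"
      using kkd by (intro always_eventually allI less_imp_le)
    show "(\<lambda>n. \<delta> + inverse (real (Suc n))) \<longlonglongrightarrow> \<delta>"
      using tendsto_add[OF tendsto_const LIMSEQ_inverse_real_of_nat, of \<delta>] by simp
  qed simp
  have T2: "(\<lambda>n. l2norm (\<lambda>t. kk n t - k t)) \<longlonglongrightarrow> 0"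
  proof (rule LIMSEQ_I)
    fix r :: real assume "r > 0"
    then obtain M where "\<forall>n\<ge>M. l2norm (\<lambda>t. kk n t - k t) < r" using kconv by blast
    then show "\<exists>no. \<forall>n\<ge>no. norm (l2norm (\<lambda>t. kk n t - k t) - 0) < r"
      by (auto simp: l2norm_nonneg)
  qed
  have T3: "(\<lambda>n. sqrt (nsq (\<lambda>t. w t - kk n t)) + l2norm (\<lambda>t. kk n t - k t)) \<longlonglongrightarrow> sqrt \<delta> + 0"
    by (intro tendsto_add tendsto_real_sqrt T1 T2)
  have "l2norm (\<lambda>t. w t - k t) \<le> sqrt \<delta> + 0"
  proof (rule LIMSEQ_le_const[OF T3], intro exI allI impI)
    fix n :: nat
    show "l2norm (\<lambda>t. w t - k t) \<le> sqrt (nsq (\<lambda>t. w t - kk n t)) + l2norm (\<lambda>t. kk n t - k t)"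
      using l2norm_tri[OF w kL2 kkL2[of n]] by (simp add: l2norm_nsq)
  qed
  then have "sqrt (nsq (\<lambda>t. w t - k t)) \<le> sqrt \<delta>" by (simp add: l2norm_nsq)
  then have kmin: "nsq (\<lambda>t. w t - k t) \<le> \<delta>" by simp
  show ?thesis
  proof (intro bexI[OF _ kK] ballI)
    fix h assume hK: "h \<in> K"
    have hL2: "h \<in> L2" using hK KL2 by auto
    define u where "u = (\<lambda>t. w t - k t)"
    have uL2: "u \<in> L2" unfolding u_def by (rule L2_diff[OF w kL2])
    define C where "C = (cmod (l2ip u h))^2"
    define s where "s = inverse (nsq h + 1)"
    have sp: "s > 0" unfolding s_def using nsq_nonneg[of h] by simp
    have sh: "s * nsq h < 1" unfolding s_def using nsq_nonneg[of h] by (simp add: field_simps)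
    define k' where "k' = (\<lambda>t. 1 * k t + (complex_of_real s * l2ip u h) * h t)"
    have k'K: "k' \<in> K" unfolding k'_def by (rule Klin[OF kK hK])
    have e: "(\<lambda>t. w t - k' t) = (\<lambda>t. u t - (complex_of_real s * l2ip u h) * h t)"
      by (auto simp: k'_def u_def)
    have "\<delta> \<le> nsq (\<lambda>t. w t - k' t)" by (rule dlow[OF k'K])
    also have "\<dots> = nsq u - 2 * s * C + s^2 * C * nsq h"
      unfolding e C_def by (rule quad_eq[OF uL2 hL2])
    finally have "0 \<le> - 2 * s * C + s^2 * C * nsq h" using kmin unfolding u_def by linarith
    then have ge: "0 \<le> s * C * (s * nsq h - 2)" by (simp add: algebra_simps power2_eq_square)
    have neg: "s * nsq h - 2 < 0" using sh by linarith
    have C0: "C \<ge> 0" unfolding C_def by simp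
    have "C = 0"
    proof (rule ccontr)
      assume "C \<noteq> 0"
      then have "C > 0" using C0 by simp
      then have "s * C > 0" using sp by simp
      then have "s * C * (s * nsq h - 2) < 0" using neg by (rule mult_pos_neg)
      then show False using ge by linarith
    qed
    then show "l2ip (\<lambda>t. w t - k t) h = 0" unfolding C_def u_def by simp
  qed
qed



definition Jint :: "real \<Rightarrow> real \<Rightarrow> real \<Rightarrow> complex" where
  "Jint a b t = (LINT s|lborel. indicator {a..b} s *\<^sub>R exp (\<i> * complex_of_real (t * s)))"

lemma i_aux: "- (\<i> * (z * \<i>)) = (z::complex)"
proof -
  have "\<i> * (z * \<i>) = \<i> * (\<i> * z)" by (simp add: mult.commute)
  also have "\<dots> = - z" by (rule complex_i_mult_minus)
  finally show ?thesis by simp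
qed

lemma Jint_FTC:
  assumes ab: "a \<le> b" and t: "t \<noteq> 0"
  shows "Jint a b t = (exp (\<i> * complex_of_real (t * b)) - exp (\<i> * complex_of_real (t * a))) / (\<i> * complex_of_real t)"
proof -
  define G where "G z = exp (\<i> * (complex_of_real t * z)) / (\<i> * complex_of_real t)" for z
  have dG: "(G has_field_derivative exp (\<i> * complex_of_real (t * x))) (at (complex_of_real x))" for x
  proof -
    have "(G has_field_derivative exp (\<i> * (complex_of_real t * complex_of_real x)) * (\<i> * complex_of_real t) / (\<i> * complex_of_real t)) (at (complex_of_real x))"
      unfolding G_def by (auto intro!: derivative_eq_intros simp: i_aux)
    moreover have "exp (\<i> * (complex_of_real t * complex_of_real x)) * (\<i> * complex_of_real t) / (\<i> * complex_of_real t) = exp (\<i> * complex_of_real (t * x))"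
      using t by simp
    ultimately show ?thesis by simp
  qed
  have "Jint a b t = (\<lambda>x. G (complex_of_real x)) b - (\<lambda>x. G (complex_of_real x)) a"
    unfolding Jint_def
  proof (rule integral_FTC_atLeastAtMost[OF ab])
    show "((\<lambda>x. G (complex_of_real x)) has_vector_derivative exp (\<i> * complex_of_real (t * x))) (at x within {a..b})" for x
      by (rule has_vector_derivative_real_field[OF dG])
    show "continuous_on {a..b} (\<lambda>x. exp (\<i> * complex_of_real (t * x)))"
      by (intro continuous_intros)
  qed
  then show ?thesis by (simp add: G_def diff_divide_distrib)
qed

lemma Jint_bound1:
  assumes ab: "a \<le> b"
  shows "cmod (Jint a b t) \<le> b - a"
proof -
  have "cmod (Jint a b t) \<le> (LINT s|lborel. norm (indicator {a..b} s *\<^sub>R exp (\<i> * complex_of_real (t * s))))"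
    unfolding Jint_def by (rule integral_norm_bound)
  also have "\<dots> = (LINT s|lborel. indicator {a..b} s)"
    by (intro Bochner_Integration.integral_cong) (auto simp: indicator_def norm_exp_i_times)
  also have "\<dots> = b - a" using ab by simp
  finally show ?thesis .
qed

lemma Jint_bound2:
  assumes ab: "a \<le> b" and t: "t \<noteq> 0"
  shows "cmod (Jint a b t) \<le> 2 / \<bar>t\<bar>"
proof -
  have "cmod (exp (\<i> * complex_of_real (t * b)) - exp (\<i> * complex_of_real (t * a))) \<le> 2"
    using norm_triangle_ineq4[of "exp (\<i> * complex_of_real (t * b))" "exp (\<i> * complex_of_real (t * a))"]
    by (simp add: norm_exp_i_times)
  then show ?thesis using t unfolding Jint_FTC[OF ab t]
    by (simp add: norm_divide norm_mult divide_right_mono)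
qed

lemma Jint_int: "integrable lborel (\<lambda>s. indicator {a..b} s *\<^sub>R exp (\<i> * complex_of_real (t * s)))"
  by (rule borel_integrable_compact) (auto intro!: continuous_intros)



lemma Jint_closed:
  assumes ab: "a \<le> b"
  shows "Jint a b t = (if t = 0 then complex_of_real (b - a) else
     (exp (\<i> * complex_of_real (t * b)) - exp (\<i> * complex_of_real (t * a))) / (\<i> * complex_of_real t))"
proof (cases "t = 0")
  case True
  have "Jint a b t = (LINT s|lborel. indicator {a..b} s *\<^sub>R (1::complex))"
    unfolding Jint_def True by simp
  also have "\<dots> = complex_of_real (b - a)" using ab by (simp add: scaleR_conv_of_real)
  finally show ?thesis using True by simp
next
  case False
  then show ?thesis using Jint_FTC[OF ab False] by simp
qed

lemma Jint_meas[measurable]: "a \<le> b \<Longrightarrow> Jint a b \<in> borel_measurable borel"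
proof -
  assume ab: "a \<le> b"
  have "Jint a b = (\<lambda>t. if t = 0 then complex_of_real (b - a) else
     (exp (\<i> * complex_of_real (t * b)) - exp (\<i> * complex_of_real (t * a))) / (\<i> * complex_of_real t))"
    using Jint_closed[OF ab] by auto
  also have "\<dots> \<in> borel_measurable borel" by measurable
  finally show ?thesis .
qed

lemma eta_split:
  "eta t = complex_of_real (1 / (2 * pi)) * (Jint (-2*pi) (-pi) t + Jint pi (2*pi) t)"
proof -
  define c where "c = 1 / sqrt (2 * pi)"
  let ?E = "\<lambda>s. exp (\<i> * complex_of_real (t * s))"
  have pw: "?E s * eta_hat s = complex_of_real c * (indicator {-2*pi..-pi} s *\<^sub>R ?E s + indicator {pi..2*pi} s *\<^sub>R ?E s)" for s
  proof -
    have "indicator ({-2*pi..-pi} \<union> {pi..2*pi}) s = (indicator {-2*pi..-pi} s + indicator {pi..2*pi} s :: real)"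
    proof -
      have "s \<le> -pi \<Longrightarrow> pi \<le> s \<Longrightarrow> False" using pi_gt_zero by linarith
      then show ?thesis by (auto simp: indicator_def)
    qed
    then show ?thesis unfolding eta_hat_def c_def
      by (simp add: scaleR_conv_of_real algebra_simps)
  qed
  have "(LINT s|lborel. ?E s * eta_hat s) = complex_of_real c * (Jint (-2*pi) (-pi) t + Jint pi (2*pi) t)"
  proof -
    have "(LINT s|lborel. ?E s * eta_hat s) = (LINT s|lborel. complex_of_real c * (indicator {-2*pi..-pi} s *\<^sub>R ?E s + indicator {pi..2*pi} s *\<^sub>R ?E s))"
      by (simp only: pw)
    also have "\<dots> = complex_of_real c * (LINT s|lborel. indicator {-2*pi..-pi} s *\<^sub>R ?E s + indicator {pi..2*pi} s *\<^sub>R ?E s)"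
      by (rule Bochner_Integration.integral_mult_right_zero)
    also have "(LINT s|lborel. indicator {-2*pi..-pi} s *\<^sub>R ?E s + indicator {pi..2*pi} s *\<^sub>R ?E s) = Jint (-2*pi) (-pi) t + Jint pi (2*pi) t"
      unfolding Jint_def by (rule Bochner_Integration.integral_add[OF Jint_int Jint_int])
    finally show ?thesis .
  qed
  then have "eta t = complex_of_real c * (complex_of_real c * (Jint (-2*pi) (-pi) t + Jint pi (2*pi) t))"
    unfolding eta_def c_def by simp
  also have "complex_of_real c * (complex_of_real c * X) = complex_of_real (1 / (2 * pi)) * X" for X
  proof -
    have "sqrt (2 * pi) * sqrt (2 * pi) = 2 * pi" using real_sqrt_mult_self[of "2*pi"] pi_gt_zero by simp
    then have "c * c = 1 / (2 * pi)" unfolding c_def by (simp add: field_simps)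
    then show ?thesis by (simp flip: of_real_mult add: mult.assoc[symmetric])
  qed
  finally show ?thesis .
qed

lemma eta_bound1: "cmod (eta t) \<le> 1"
proof -
  have "cmod (eta t) \<le> (1 / (2 * pi)) * (cmod (Jint (-2*pi) (-pi) t) + cmod (Jint pi (2*pi) t))"
  proof -
    have "cmod (eta t) = (1 / (2 * pi)) * cmod (Jint (-2*pi) (-pi) t + Jint pi (2*pi) t)"
      unfolding eta_split norm_mult norm_of_real using pi_gt_zero by simp
    also have "\<dots> \<le> (1 / (2 * pi)) * (cmod (Jint (-2*pi) (-pi) t) + cmod (Jint pi (2*pi) t))"
      using pi_gt_zero by (intro mult_left_mono norm_triangle_ineq) simp
    finally show ?thesis .
  qed
  also have "\<dots> \<le> (1 / (2 * pi)) * (pi + pi)"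
    using Jint_bound1[of "-2*pi" "-pi" t] Jint_bound1[of pi "2*pi" t] pi_gt_zero
    by (intro mult_left_mono add_mono) auto
  also have "\<dots> = 1" using pi_gt_zero by simp
  finally show ?thesis .
qed

lemma eta_bound2: "t \<noteq> 0 \<Longrightarrow> cmod (eta t) \<le> 1 / \<bar>t\<bar>"
proof -
  assume t: "t \<noteq> 0"
  have "cmod (eta t) \<le> (1 / (2 * pi)) * (cmod (Jint (-2*pi) (-pi) t) + cmod (Jint pi (2*pi) t))"
  proof -
    have "cmod (eta t) = (1 / (2 * pi)) * cmod (Jint (-2*pi) (-pi) t + Jint pi (2*pi) t)"
      unfolding eta_split norm_mult norm_of_real using pi_gt_zero by simp
    also have "\<dots> \<le> (1 / (2 * pi)) * (cmod (Jint (-2*pi) (-pi) t) + cmod (Jint pi (2*pi) t))"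
      using pi_gt_zero by (intro mult_left_mono norm_triangle_ineq) simp
    finally show ?thesis .
  qed
  also have "\<dots> \<le> (1 / (2 * pi)) * (2 / \<bar>t\<bar> + 2 / \<bar>t\<bar>)"
    using Jint_bound2[of "-2*pi" "-pi" t] Jint_bound2[of pi "2*pi" t] pi_gt_zero t
    by (intro mult_left_mono add_mono) auto
  also have "\<dots> = (2 / pi) * (1 / \<bar>t\<bar>)" using pi_gt_zero by (simp add: field_simps)
  also have "\<dots> \<le> 1 * (1 / \<bar>t\<bar>)"
    using pi_gt3 by (intro mult_right_mono) (auto simp: field_simps)
  finally show ?thesis by simp
qed

lemma eta_sq_bound: "(cmod (eta t))^2 \<le> 2 * rho t"
proof (cases "t^2 \<le> 1")
  case True
  have "(cmod (eta t))^2 \<le> 1^2" using eta_bound1[of t] by (intro power_mono) auto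
  also have "\<dots> \<le> 2 * rho t"
  proof -
    have p: "0 < 1 + t^2" by (simp add: add_pos_nonneg)
    have "1 \<le> 2 / (1 + t^2)" using p True by (simp add: le_divide_eq)
    then show ?thesis unfolding rho_def by (simp add: divide_inverse)
  qed
  finally show ?thesis .
next
  case False
  then have t: "t \<noteq> 0" by auto
  have "(cmod (eta t))^2 \<le> (1 / \<bar>t\<bar>)^2" using eta_bound2[OF t] by (intro power_mono) auto
  also have "\<dots> = 1 / t^2" by (simp add: power_divide)
  also have "\<dots> \<le> 2 * rho t" unfolding rho_def using False t
    by (simp add: field_simps)
  finally show ?thesis .
qed

lemma eta_meas[measurable]: "eta \<in> borel_measurable borel"
proof -
  have "eta = (\<lambda>t. complex_of_real (1 / (2 * pi)) * (Jint (-2*pi) (-pi) t + Jint pi (2*pi) t))"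
    using eta_split by auto
  also have "\<dots> \<in> borel_measurable borel"
    using pi_gt_zero by measurable
  finally show ?thesis .
qed

lemma eta_L2: "eta \<in> L2"
proof (rule L2_I)
  show "eta \<in> borel_measurable lborel" by simp
  show "integrable lborel (\<lambda>t. (cmod (eta t))\<^sup>2)"
  proof (rule Bochner_Integration.integrable_bound)
    show "integrable lborel (\<lambda>t. 2 * rho t)" using rho_int by simp
    show "AE t in lborel. norm ((cmod (eta t))\<^sup>2) \<le> norm (2 * rho t)"
      using eta_sq_bound rho_pos by (auto intro!: always_eventually simp: less_imp_le)
  qed simp
qed



lemma psi_nonnull:
  assumes pw: "parseval_wavelet \<psi>"
  shows "l2norm \<psi> \<noteq> 0"
proof
  assume n0: "l2norm \<psi> = 0"
  have psiL2: "\<psi> \<in> L2" using pw by (simp add: parseval_wavelet_def)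
  note [measurable] = L2_meas[OF psiL2] L2_meas_borel[OF psiL2]
  have ae: "AE t in lborel. \<psi> t = 0" by (rule l2norm_zero_AE[OF psiL2 n0])
  define x where "x = (\<lambda>t::real. complex_of_real (indicator {0..1} t))"
  have xm[measurable]: "x \<in> borel_measurable lborel" unfolding x_def by measurable
  have xsq: "(\<lambda>t. (cmod (x t))^2) = indicator {0..1}"
    by (auto simp: x_def indicator_def)
  have xL2: "x \<in> L2"
    by (rule L2_I[OF xm]) (simp add: xsq)
  have xn: "l2norm x = 1"
    unfolding l2norm_def xsq by simp
  have coef: "l2ip x (Dp m (Tp l \<psi>)) = 0" for m l
  proof -
    have c: "(2::real) powr real_of_int m \<noteq> 0" by simp
    have "AE t in lborel. \<psi> (- real_of_int l + 2 powr real_of_int m * t) = 0"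
      by (rule AE_borel_affine[OF c _ ae]) measurable
    then have ae0: "AE t in lborel. x t * cnj (Dp m (Tp l \<psi>) t) = 0"
      by eventually_elim (simp add: Dp_def Tp_def algebra_simps)
    show ?thesis unfolding l2ip_def by (rule integral_eq_zero_AE[OF ae0])
  qed
  have "((\<lambda>(m, l). (cmod (l2ip x (Dp m (Tp l \<psi>))))^2) has_sum (l2norm x)^2) UNIV"
    using pw xL2 by (simp add: parseval_wavelet_def)
  moreover have "((\<lambda>(m, l). (cmod (l2ip x (Dp m (Tp l \<psi>))))^2) has_sum 0) (UNIV :: (int \<times> int) set)"
    by (rule has_sum_0) (auto simp: coef)
  ultimately have "(l2norm x)^2 = 0" by (rule has_sum_unique)
  then show False using xn by simp
qed

theorem mainTheorem3:
  fixes \<psi> :: cfun and Xi :: "cfun \<Rightarrow> cfun"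
  assumes "parseval_wavelet \<psi>"
    and "\<forall>f\<in>L2. Xi f \<in> L2"
    and "\<forall>f\<in>L2. \<forall>g\<in>L2. \<forall>a b.
           l2norm (\<lambda>t. Xi (\<lambda>s. a * f s + b * g s) t - (a * Xi f t + b * Xi g t)) = 0"
    and "\<exists>C. \<forall>f\<in>L2. l2norm (Xi f) \<le> C * l2norm f"
    and "\<forall>n l. l2norm (\<lambda>t. Xi (Dp n (Tp l eta)) t - Dp n (Tp l \<psi>) t) = 0"
  shows "\<exists>w\<in>W0. (\<exists>p. is_l2_proj (l2_orth (l2_ker Xi)) w p)
                \<and> (\<forall>p. is_l2_proj (l2_orth (l2_ker Xi)) w p \<longrightarrow> l2norm p \<noteq> 0)"
proof -
  note pw = assms(1)
  have XL2: "\<And>f. f \<in> L2 \<Longrightarrow> Xi f \<in> L2" using assms(2) by blast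
  have Xlin: "\<And>f g a b. f \<in> L2 \<Longrightarrow> g \<in> L2 \<Longrightarrow>
      l2norm (\<lambda>t. Xi (\<lambda>s. a * f s + b * g s) t - (a * Xi f t + b * Xi g t)) = 0"
    using assms(3) by blast
  obtain C where C: "\<And>f. f \<in> L2 \<Longrightarrow> l2norm (Xi f) \<le> C * l2norm f" using assms(4) by blast
  have psiL2: "\<psi> \<in> L2" using pw by (simp add: parseval_wavelet_def)
  define K where "K = l2_ker Xi"
  have KL2: "K \<subseteq> L2" unfolding K_def l2_ker_def by auto
  have Xlb: "l2norm (Xi (\<lambda>s. a * f s + b * g s)) \<le> cmod a * l2norm (Xi f) + cmod b * l2norm (Xi g)"
    if f: "f \<in> L2" and g: "g \<in> L2" for f g a b
  proof -
    let ?L = "\<lambda>s. a * f s + b * g s"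
    have LL2: "?L \<in> L2" by (rule L2_lin[OF f g])
    have cL2: "(\<lambda>t. a * Xi f t + b * Xi g t) \<in> L2" by (rule L2_lin[OF XL2[OF f] XL2[OF g]])
    have uL2: "(\<lambda>t. Xi ?L t - (a * Xi f t + b * Xi g t)) \<in> L2" by (rule L2_diff[OF XL2[OF LL2] cL2])
    have "l2norm (Xi ?L) = l2norm (\<lambda>t. (Xi ?L t - (a * Xi f t + b * Xi g t)) + (a * Xi f t + b * Xi g t))"
      by simp
    also have "\<dots> \<le> l2norm (\<lambda>t. Xi ?L t - (a * Xi f t + b * Xi g t)) + l2norm (\<lambda>t. a * Xi f t + b * Xi g t)"
      by (rule l2norm_add[OF uL2 cL2])
    also have "l2norm (\<lambda>t. Xi ?L t - (a * Xi f t + b * Xi g t)) = 0" by (rule Xlin[OF f g])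
    also have "l2norm (\<lambda>t. a * Xi f t + b * Xi g t) \<le> l2norm (\<lambda>t. a * Xi f t) + l2norm (\<lambda>t. b * Xi g t)"
      by (rule l2norm_add[OF L2_scale[OF XL2[OF f]] L2_scale[OF XL2[OF g]]])
    finally show ?thesis by (simp add: l2norm_scale)
  qed
  define z where "z = (\<lambda>t::real. 0::complex)"
  have zL2: "z \<in> L2" unfolding z_def by (rule L2_I) auto
  have "l2norm (Xi z) \<le> C * l2norm z" by (rule C[OF zL2])
  moreover have "l2norm z = 0" by (simp add: z_def l2norm_def)
  ultimately have "l2norm (Xi z) = 0" using l2norm_nonneg[of "Xi z"] by simp
  then have zK: "z \<in> K" using zL2 by (simp add: K_def l2_ker_def)
  have Klin: "(\<lambda>t. a * f t + b * g t) \<in> K" if "f \<in> K" "g \<in> K" for f g a b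
  proof -
    have f: "f \<in> L2" and g: "g \<in> L2" and f0: "l2norm (Xi f) = 0" and g0: "l2norm (Xi g) = 0"
      using that by (auto simp: K_def l2_ker_def)
    have "l2norm (Xi (\<lambda>s. a * f s + b * g s)) \<le> 0" using Xlb[OF f g, of a b] f0 g0 by simp
    then show ?thesis using l2norm_nonneg L2_lin[OF f g] by (simp add: K_def l2_ker_def eq_iff)
  qed
  have Kcl: "f \<in> K" if f: "f \<in> L2" and ap: "\<forall>e>0. \<exists>g\<in>K. l2norm (\<lambda>t. f t - g t) < e" for f
  proof -
    define C' where "C' = max C 0 + 1"
    have C'p: "C' > 0" unfolding C'_def by simp
    have bnd: "l2norm (Xi f) < C' * e" if e: "e > 0" for e
    proof -
      obtain g where gK: "g \<in> K" and ge: "l2norm (\<lambda>t. f t - g t) < e" using ap e by blast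
      have g: "g \<in> L2" and g0: "l2norm (Xi g) = 0" using gK by (auto simp: K_def l2_ker_def)
      have dL2: "(\<lambda>t. f t - g t) \<in> L2" by (rule L2_diff[OF f g])
      have eqf: "(\<lambda>s. 1 * g s + 1 * (f s - g s)) = f" by auto
      have "l2norm (Xi f) \<le> cmod (1::complex) * l2norm (Xi g) + cmod (1::complex) * l2norm (Xi (\<lambda>t. f t - g t))"
        using Xlb[OF g dL2, of 1 1] unfolding eqf .
      also have "\<dots> = l2norm (Xi (\<lambda>t. f t - g t))" using g0 by simp
      also have "\<dots> \<le> C * l2norm (\<lambda>t. f t - g t)" by (rule C[OF dL2])
      also have "\<dots> \<le> max C 0 * l2norm (\<lambda>t. f t - g t)" by (intro mult_right_mono l2norm_nonneg) simp
      also have "\<dots> \<le> max C 0 * e" using ge by (intro mult_left_mono) auto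
      also have "\<dots> < C' * e" unfolding C'_def using e by (simp add: distrib_right)
      finally show ?thesis .
    qed
    have "l2norm (Xi f) = 0"
    proof (rule ccontr)
      assume ne: "l2norm (Xi f) \<noteq> 0"
      then have pos: "l2norm (Xi f) > 0" using l2norm_nonneg[of "Xi f"] by simp
      have "l2norm (Xi f) < C' * (l2norm (Xi f) / C')" using bnd[of "l2norm (Xi f) / C'"] pos C'p by simp
      then show False using C'p by simp
    qed
    then show ?thesis using f by (simp add: K_def l2_ker_def)
  qed
  obtain k where kK: "k \<in> K" and korth: "\<forall>h\<in>K. l2ip (\<lambda>t. eta t - k t) h = 0"
    using projection[OF KL2 _ Klin Kcl eta_L2] zK by blast
  have kL2: "k \<in> L2" using kK KL2 by auto
  define p where "p = (\<lambda>t. eta t - k t)"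
  have pL2: "p \<in> L2" unfolding p_def by (rule L2_diff[OF eta_L2 kL2])
  have pO: "p \<in> l2_orth K"
    unfolding l2_orth_def
  proof (intro CollectI conjI ballI pL2)
    fix f assume "f \<in> K"
    then have "l2ip p f = 0" using korth unfolding p_def by blast
    then show "l2ip f p = 0" by (subst l2ip_cnj) simp
  qed
  have etaW: "eta \<in> W0"
    unfolding W0_def l2_closure_def
  proof (intro CollectI conjI allI impI eta_L2)
    fix e :: real assume e: "e > 0"
    have "eta \<in> l2_span (range (\<lambda>l. Tp l eta))"
      unfolding l2_span_def
    proof (intro CollectI exI conjI)
      show "finite {eta}" by simp
      show "{eta} \<subseteq> range (\<lambda>l. Tp l eta)" by (auto simp: Tp_def image_iff intro!: exI[of _ 0])
      show "eta = (\<lambda>t. \<Sum>g\<in>{eta}. (\<lambda>_. 1) g * g t)" by simp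
    qed
    moreover have "l2norm (\<lambda>t. eta t - eta t) < e" using e by (simp add: l2norm_def)
    ultimately show "\<exists>g\<in>l2_span (range (\<lambda>l. Tp l eta)). l2norm (\<lambda>t. eta t - g t) < e" by blast
  qed
  show ?thesis
  proof (intro bexI[OF _ etaW] conjI exI allI impI)
    show "is_l2_proj (l2_orth (l2_ker Xi)) eta p"
      unfolding is_l2_proj_def K_def[symmetric]
    proof (intro conjI ballI pO)
      fix h assume "h \<in> l2_orth K"
      then have "l2ip k h = 0" using kK by (simp add: l2_orth_def)
      moreover have "(\<lambda>t. eta t - p t) = k" by (auto simp: p_def)
      ultimately show "l2ip (\<lambda>t. eta t - p t) h = 0" by simp
    qed
  next
    fix p' assume pr: "is_l2_proj (l2_orth (l2_ker Xi)) eta p'"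
    show "l2norm p' \<noteq> 0"
    proof
      assume p'0: "l2norm p' = 0"
      have p'O: "p' \<in> l2_orth K" and p'h: "\<forall>h\<in>l2_orth K. l2ip (\<lambda>t. eta t - p' t) h = 0"
        using pr unfolding is_l2_proj_def K_def by auto
      have p'L2: "p' \<in> L2" using p'O by (simp add: l2_orth_def)
      have d'L2: "(\<lambda>t. eta t - p' t) \<in> L2" by (rule L2_diff[OF eta_L2 p'L2])
      have e1: "eta = (\<lambda>t. 1 * (eta t - p' t) + 1 * p' t)" by auto
      have "l2ip eta p = 1 * l2ip (\<lambda>t. eta t - p' t) p + 1 * l2ip p' p"
        by (subst e1, rule l2ip_lin_left[OF d'L2 p'L2 pL2])
      also have "l2ip (\<lambda>t. eta t - p' t) p = 0" using p'h pO by blast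
      also have "l2ip p' p = 0" by (rule l2ip_zero_left[OF p'0 p'L2 pL2])
      finally have ep: "l2ip eta p = 0" by simp
      have kp: "l2ip k p = 0" using pO kK by (simp add: l2_orth_def)
      have e2: "p = (\<lambda>t. 1 * eta t + (-1) * k t)" by (auto simp: p_def)
      have "complex_of_real (nsq p) = l2ip p p" by (simp only: l2ip_self)
      also have "\<dots> = 1 * l2ip eta p + (-1) * l2ip k p"
        by (subst (1) e2, rule l2ip_lin_left[OF eta_L2 kL2 pL2])
      also have "\<dots> = 0" using ep kp by simp
      finally have "nsq p = 0" by simp
      then have pn: "l2norm (\<lambda>t. eta t - k t) = 0" by (simp add: l2norm_nsq p_def)
      have "eta \<in> K"
      proof (rule Kcl[OF eta_L2], intro allI impI)
        fix e :: real assume "e > 0"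
        then show "\<exists>g\<in>K. l2norm (\<lambda>t. eta t - g t) < e" using kK pn by (intro bexI[of _ k]) auto
      qed
      then have X0: "l2norm (Xi eta) = 0" by (simp add: K_def l2_ker_def)
      have "Dp 0 (Tp 0 eta) = eta" by (simp add: Dp_def Tp_def)
      moreover have "Dp 0 (Tp 0 \<psi>) = \<psi>" by (simp add: Dp_def Tp_def)
      ultimately have X1: "l2norm (\<lambda>t. Xi eta t - \<psi> t) = 0" using assms(5) by metis
      have "l2norm \<psi> = l2norm (\<lambda>t. (\<psi> t - Xi eta t) + Xi eta t)" by simp
      also have "\<dots> \<le> l2norm (\<lambda>t. \<psi> t - Xi eta t) + l2norm (Xi eta)"
        by (rule l2norm_add[OF L2_diff[OF psiL2 XL2[OF eta_L2]] XL2[OF eta_L2]])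
      also have "\<dots> = 0" using X0 X1 by (simp add: l2norm_commute)
      finally have "l2norm \<psi> = 0" using l2norm_nonneg[of \<psi>] by simp
      then show False using psi_nonnull[OF pw] by simp
    qed
  qed
qed


end
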